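(* Let $H$ be a Kekul\'ean hexagonal system and $n\ge 0$. For every Clar cover $C$ of $H$ with exactly $n$ hexagons, the graph $f(C)$ is isomorphic to the $n$-cube $Q_n$; hence $f(C)$ is an induced subgraph of $R(H)$ isomorphic to $Q_n$.
   Context: A hexagonal system is a 2-connected finite plane graph in which every interior face is a regular hexagon of side length one; its hexagons are the boundaries of its interior faces; it is Kekul\'ean if it has a perfect matching. A Clar cover of $H$ is a spanning subgraph each of whose components is a hexagon of $H$ or a single edge. The resonance graph $R(H)$ has the perfect matchings of $H$ as vertices, two adjacent iff their symmetric difference is the edge set of a hexagon of $H$. For a Clar cover $C$, $f(C)$ denotes the subgraph of $R(H)$ induced by all perfect matchings $M$ of $H$ such that every hexagon component of $C$ is $M$-alternating (its edges alternately in and not in $M$) and every single-edge component of $C$ belongs to $M$. *)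

theory Defs
  imports Main
begin

text \<open>Hexagonal (honeycomb) lattice, encoded via its dual triangular lattice.
  Cells (unit hexagons of the honeycomb tiling) are indexed by int x int; the six
  neighbouring cells of a cell, in counter-clockwise cyclic order, are given by dirs.
  A vertex of the honeycomb is the set of the 3 cells meeting at it (a triangle of the
  dual lattice); an edge of the honeycomb is the 2-set of its two endpoint vertices.\<close>

type_synonym cell = "int \<times> int"

definition dirs :: "(int \<times> int) list" where
  "dirs = [(1,0),(0,1),(-1,1),(-1,0),(0,-1),(1,-1)]"

definition nb :: "cell \<Rightarrow> nat \<Rightarrow> cell" where
  "nb c i = (fst c + fst (dirs ! (i mod 6)), snd c + snd (dirs ! (i mod 6)))"

definition cell_adj :: "cell \<Rightarrow> cell \<Rightarrow> bool" where
  "cell_adj c d \<longleftrightarrow> (\<exists>i<6. d = nb c i)"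

definition tri :: "cell set \<Rightarrow> bool" where
  "tri T \<longleftrightarrow> (\<exists>c i. T = {c, nb c i, nb c (Suc i)})"

text \<open>The i-th edge of the hexagon of cell c (the edge separating c from nb c i);
  consecutive edges i, i+1 share a vertex, so i = 0..5 runs once around the hexagon.\<close>
definition hex_edge :: "cell \<Rightarrow> nat \<Rightarrow> cell set set" where
  "hex_edge c i = {{c, nb c (i + 5), nb c i}, {c, nb c i, nb c (Suc i)}}"

definition hexE :: "cell \<Rightarrow> cell set set set" where
  "hexE c = range (hex_edge c)"

definition hexV :: "cell \<Rightarrow> cell set set" where
  "hexV c = {T. tri T \<and> c \<in> T}"

definition hV :: "cell set \<Rightarrow> cell set set" where
  "hV S = (\<Union>c\<in>S. hexV c)"

definition hE :: "cell set \<Rightarrow> cell set set set" where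
  "hE S = (\<Union>c\<in>S. hexE c)"

definition graph_connected :: "'v set \<Rightarrow> 'v set set \<Rightarrow> bool" where
  "graph_connected V E \<longleftrightarrow>
     (\<forall>x\<in>V. \<forall>y\<in>V. (x, y) \<in> {(a, b). a \<in> V \<and> b \<in> V \<and> {a, b} \<in> E}\<^sup>*)"

definition two_connected :: "'v set \<Rightarrow> 'v set set \<Rightarrow> bool" where
  "two_connected V E \<longleftrightarrow> finite V \<and> card V \<ge> 3 \<and> graph_connected V E \<and>
     (\<forall>v\<in>V. graph_connected (V - {v}) E)"

text \<open>A hexagonal system: a finite set S of cells whose union graph is 2-connected and
  has no holes (every interior face is a hexagon of S), i.e. the cells not in S form a
  connected set in the cell adjacency graph.\<close>
definition hexagonal_system :: "cell set \<Rightarrow> bool" where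
  "hexagonal_system S \<longleftrightarrow> finite S \<and> two_connected (hV S) (hE S) \<and>
     (\<forall>c d. c \<notin> S \<longrightarrow> d \<notin> S \<longrightarrow>
        (c, d) \<in> {(a, b). a \<notin> S \<and> b \<notin> S \<and> cell_adj a b}\<^sup>*)"

definition perfect_matching :: "'v set \<Rightarrow> 'v set set \<Rightarrow> 'v set set \<Rightarrow> bool" where
  "perfect_matching V E M \<longleftrightarrow> M \<subseteq> E \<and> (\<forall>v\<in>V. \<exists>!e. e \<in> M \<and> v \<in> e)"

definition kekulean :: "cell set \<Rightarrow> bool" where
  "kekulean S \<longleftrightarrow> (\<exists>M. perfect_matching (hV S) (hE S) M)"

definition alternating :: "cell \<Rightarrow> cell set set set \<Rightarrow> bool" where
  "alternating c M \<longleftrightarrow> (\<forall>i. hex_edge c i \<in> M \<longleftrightarrow> hex_edge c (Suc i) \<notin> M)"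

text \<open>A Clar cover, represented by its components: a set Hs of hexagons of S and a set
  Es of edges of the graph, such that every vertex lies in exactly one component.\<close>
definition clar_cover :: "cell set \<Rightarrow> cell set \<Rightarrow> cell set set set \<Rightarrow> bool" where
  "clar_cover S Hs Es \<longleftrightarrow> Hs \<subseteq> S \<and> Es \<subseteq> hE S \<and>
     (\<forall>v\<in>hV S. card {c\<in>Hs. v \<in> hexV c} + card {e\<in>Es. v \<in> e} = 1)"

definition res_adj :: "cell set \<Rightarrow> cell set set set \<Rightarrow> cell set set set \<Rightarrow> bool" where
  "res_adj S M M' \<longleftrightarrow> (\<exists>c\<in>S. (M - M') \<union> (M' - M) = hexE c)"

text \<open>Vertex set of f(C); f(C) itself is the subgraph of R(H) induced by it.\<close>
definition fC :: "cell set \<Rightarrow> cell set \<Rightarrow> cell set set set \<Rightarrow> cell set set set set" where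
  "fC S Hs Es = {M. perfect_matching (hV S) (hE S) M \<and>
                    (\<forall>c\<in>Hs. alternating c M) \<and> Es \<subseteq> M}"

end

theory Submission
  imports Defs
begin


lemma nb_mod: "i mod 6 = j mod 6 \<Longrightarrow> nb c i = nb c j" by (simp add: nb_def)

lemma nb_addm: "nb x (i + m) = nb x (i mod 6 + m)"
  by (rule nb_mod) (simp add: mod_add_left_eq)

lemma six_cases: "(r::nat) < 6 \<Longrightarrow> r = 0 \<or> r = 1 \<or> r = 2 \<or> r = 3 \<or> r = 4 \<or> r = 5" by auto

lemma G_a: "nb (nb d i) (i+3) = d"
proof -
  have "i mod 6 < 6" by simp
  then have "nb (nb d (i mod 6)) (i mod 6+3) = d"
    using six_cases[of "i mod 6"] by (auto simp: nb_def dirs_def prod_eq_iff)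
  then show ?thesis using nb_addm[of _ i 3] nb_addm[of _ i 0] by simp
qed

lemma G_b: "nb d (Suc i) = nb (nb d i) (i+2)"
proof -
  have "i mod 6 < 6" by simp
  then have "nb d (i mod 6 + 1) = nb (nb d (i mod 6)) (i mod 6+2)"
    using six_cases[of "i mod 6"] by (auto simp: nb_def dirs_def prod_eq_iff)
  then show ?thesis using nb_addm[of _ i 2] nb_addm[of _ i 0] nb_addm[of _ i 1] by simp
qed

lemma G_c: "nb d i = nb (nb d (Suc i)) (i+5)"
proof -
  have "i mod 6 < 6" by simp
  then have "nb d (i mod 6) = nb (nb d (i mod 6 + 1)) (i mod 6+5)"
    using six_cases[of "i mod 6"] by (auto simp: nb_def dirs_def prod_eq_iff)
  then show ?thesis using nb_addm[of _ i 5] nb_addm[of _ i 0] nb_addm[of _ i 1] by simp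
qed

lemma G_d: "nb (nb d (Suc i)) (i+4) = d"
proof -
  have "Suc i + 3 = i + 4" by simp
  then show ?thesis using G_a[of d "Suc i"] by metis
qed

lemma hex_edge_mod: "hex_edge c k = hex_edge c (k mod 6)"
proof -
  have "nb c (k+5) = nb c (k mod 6 + 5)" "nb c (Suc k) = nb c (Suc (k mod 6))"
       "nb c k = nb c (k mod 6)"
    by (rule nb_mod; simp add: mod_add_left_eq mod_Suc_eq)+
  then show ?thesis by (simp add: hex_edge_def)
qed

lemma he_mem: "T \<in> hex_edge c k \<Longrightarrow> T = {c, nb c (k+5), nb c k} \<or> T = {c, nb c k, nb c (Suc k)}"
  by (auto simp: hex_edge_def)

lemma he_in: "{c, nb c (k+5), nb c k} \<in> hex_edge c k"
  by (auto simp: hex_edge_def)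

lemma nb_ne: "nb c k \<noteq> c"
proof -
  have "k mod 6 < 6" by simp
  then have "nb c (k mod 6) \<noteq> c" using six_cases[of "k mod 6"] by (cases c) (auto simp: nb_def dirs_def)
  then show ?thesis using nb_addm[of c k 0] by simp
qed

lemma brute1': "k<6 \<Longrightarrow> k'<6 \<Longrightarrow> nb (a,b) k \<in> {(a,b), nb (a,b) (k'+5), nb (a,b) k'} \<Longrightarrow>
   nb (a,b) k \<in> {(a,b), nb (a,b) k', nb (a,b) (Suc k')} \<Longrightarrow> k = k'"
  apply (drule six_cases, drule six_cases)
  by (elim disjE; simp add: nb_def dirs_def)

lemma brute1: assumes "k<6" "k'<6" "nb c k \<in> {c, nb c (k'+5), nb c k'}"
   "nb c k \<in> {c, nb c k', nb c (Suc k')}" shows "k = k'"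
  using assms brute1'[of k k' "fst c" "snd c"] by simp

lemma he_all: "T \<in> hex_edge c k \<Longrightarrow> nb c k \<in> T"
  by (auto simp: hex_edge_def)

lemma he_inj6: assumes "k<6" "k'<6" "hex_edge c k = hex_edge c k'" shows "k = k'"
proof -
  have "{c, nb c (k'+5), nb c k'} \<in> hex_edge c k" "{c, nb c k', nb c (Suc k')} \<in> hex_edge c k"
    using assms(3) by (auto simp: hex_edge_def)
  then show ?thesis using brute1[OF assms(1,2)] he_all by blast
qed

lemma he_mod_inj: "hex_edge c k = hex_edge c k' \<Longrightarrow> k mod 6 = k' mod 6"
  using he_inj6[of "k mod 6" "k' mod 6" c] hex_edge_mod[of c k] hex_edge_mod[of c k'] by simp

lemma he_par: "hex_edge c k = hex_edge c k' \<Longrightarrow> even k = even k'"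
proof -
  assume "hex_edge c k = hex_edge c k'"
  then have "k mod 6 = k' mod 6" by (rule he_mod_inj)
  then show ?thesis by presburger
qed

lemma brute2': "k<6 \<Longrightarrow> k'<6 \<Longrightarrow> even k = even k' \<Longrightarrow>
   nb (a,b) k' = nb (a,b) (k+5) \<or> nb (a,b) k' = nb (a,b) k \<or> nb (a,b) k' = nb (a,b) (Suc k) \<or> nb (a,b) k' = (a,b) \<Longrightarrow> k = k'"
  apply (drule six_cases, drule six_cases)
  by (elim disjE; simp add: nb_def dirs_def)

lemma brute2: assumes "k<6" "k'<6" "even k = even k'"
   "nb c k' = nb c (k+5) \<or> nb c k' = nb c k \<or> nb c k' = nb c (Suc k) \<or> nb c k' = c" shows "k = k'"
  using assms brute2'[of k k' "fst c" "snd c"] by simp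

lemma he_vert: "v \<in> hex_edge c k \<Longrightarrow> v \<in> hexV c"
proof -
  assume "v \<in> hex_edge c k"
  then have "v = {c, nb c (k+5), nb c k} \<or> v = {c, nb c k, nb c (Suc k)}" by (rule he_mem)
  moreover have "nb c (Suc (k+5)) = nb c k" by (rule nb_mod) simp
  ultimately have "tri v" unfolding tri_def by metis
  then show ?thesis using \<open>v = _ \<or> _\<close> by (auto simp: hexV_def)
qed

lemma hexV_edges: "v \<in> hexV c \<Longrightarrow> \<exists>k. v \<in> hex_edge c k \<and> v \<in> hex_edge c (Suc k)"
proof -
  assume "v \<in> hexV c"
  then obtain d i where v: "v = {d, nb d i, nb d (Suc i)}" and cv: "c \<in> v"
    by (auto simp: hexV_def tri_def)
  have "\<exists>k. v = {c, nb c k, nb c (Suc k)}"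
  proof -
    { assume "c = d" then have ?thesis using v by blast }
    moreover
    { assume h: "c = nb d i"
      have "i + 3 = Suc (i+2)" by simp
      then have "d = nb c (Suc (i+2))" using h G_a[of d i] by metis
      moreover have "nb d (Suc i) = nb c (i+2)" using h G_b[of d i] by simp
      moreover have "v = {d, c, nb d (Suc i)}" using v h by simp
      ultimately have "v = {c, nb c (i+2), nb c (Suc (i+2))}"
        by (simp only:) blast
      then have ?thesis by blast }
    moreover
    { assume h: "c = nb d (Suc i)"
      have "i + 5 = Suc (i+4)" by simp
      then have "nb d i = nb c (Suc (i+4))" using h G_c[of d i] by metis
      moreover have "d = nb c (i+4)" using h G_d[of d i] by simp
      moreover have "v = {d, nb d i, c}" using v h by simp
      ultimately have "v = {c, nb c (i+4), nb c (Suc (i+4))}"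
        by (simp only:) blast
      then have ?thesis by blast }
    ultimately show ?thesis using v cv by blast
  qed
  then obtain k where vk: "v = {c, nb c k, nb c (Suc k)}" by blast
  have "nb c (Suc k + 5) = nb c k" by (rule nb_mod) simp
  then have "v \<in> hex_edge c (Suc k)" using vk by (simp add: hex_edge_def)
  moreover have "v \<in> hex_edge c k" using vk by (simp add: hex_edge_def)
  ultimately show ?thesis by blast
qed

lemma he_unique6: "k<6 \<Longrightarrow> k'<6 \<Longrightarrow> v \<in> hex_edge c k \<Longrightarrow> v \<in> hex_edge c k' \<Longrightarrow> even k = even k' \<Longrightarrow> k = k'"
proof -
  assume a: "k<6" "k'<6" "v \<in> hex_edge c k" "v \<in> hex_edge c k'" "even k = even k'"
  have "nb c k' \<in> v" using a(4) by (auto simp: hex_edge_def)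
  moreover have "v = {c, nb c (k+5), nb c k} \<or> v = {c, nb c k, nb c (Suc k)}" using a(3) by (rule he_mem)
  ultimately have "nb c k' = nb c (k+5) \<or> nb c k' = nb c k \<or> nb c k' = nb c (Suc k) \<or> nb c k' = c" by auto
  then show ?thesis using brute2 a by blast
qed

lemma he_unique: "v \<in> hex_edge c k \<Longrightarrow> v \<in> hex_edge c k' \<Longrightarrow> even k = even k' \<Longrightarrow> hex_edge c k = hex_edge c k'"
proof -
  assume a: "v \<in> hex_edge c k" "v \<in> hex_edge c k'" "even k = even k'"
  have "even (k mod 6) = even (k' mod 6)" using a(3) by presburger
  then have "k mod 6 = k' mod 6" using he_unique6[of "k mod 6" "k' mod 6" v c] a hex_edge_mod[of c k] hex_edge_mod[of c k'] by simp
  then show ?thesis using hex_edge_mod[of c k] hex_edge_mod[of c k'] by simp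
qed

lemma hexE_alt: "hexE c = hex_edge c ` {..<6}"
proof
  show "hexE c \<subseteq> hex_edge c ` {..<6}"
  proof
    fix e assume "e \<in> hexE c"
    then obtain k where "e = hex_edge c k" by (auto simp: hexE_def)
    then have "e = hex_edge c (k mod 6)" using hex_edge_mod by simp
    then show "e \<in> hex_edge c ` {..<6}" by simp
  qed
qed (auto simp: hexE_def)

lemma card_hexE: "card (hexE c) = 6"
  unfolding hexE_alt by (subst card_image) (auto intro: inj_onI he_inj6)

lemma finite_hexE: "finite (hexE c)" unfolding hexE_alt by simp



locale cc = fixes S Hs :: "cell set" and Es :: "cell set set set"
  assumes finS: "finite S" and cl: "clar_cover S Hs Es"
begin

lemma HsS: "Hs \<subseteq> S" and EsE: "Es \<subseteq> hE S"
  using cl by (auto simp: clar_cover_def)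

lemma finHs: "finite Hs" using HsS finS finite_subset by blast

lemma finhE: "finite (hE S)" using finS finite_hexE by (simp add: hE_def)

lemma finEs: "finite Es" using EsE finhE finite_subset by blast

lemma cnt: "v \<in> hV S \<Longrightarrow> card {c\<in>Hs. v \<in> hexV c} + card {e\<in>Es. v \<in> e} = 1"
  using cl by (auto simp: clar_cover_def)

lemma edge_vert: "e \<in> hE S \<Longrightarrow> v \<in> e \<Longrightarrow> v \<in> hV S"
proof -
  assume a: "e \<in> hE S" "v \<in> e"
  then obtain d k where d: "d \<in> S" "e = hex_edge d k" by (auto simp: hE_def hexE_def)
  then have "v \<in> hexV d" using he_vert a(2) by blast
  then show ?thesis using d(1) unfolding hV_def by blast
qed

lemma edge_has_vert: "e \<in> hE S \<Longrightarrow> \<exists>v. v \<in> e"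
proof -
  assume a: "e \<in> hE S"
  then obtain d k where d: "e = hex_edge d k" by (auto simp: hE_def hexE_def)
  then show ?thesis using he_in by blast
qed

lemma hexV_in: "c \<in> Hs \<Longrightarrow> v \<in> hexV c \<Longrightarrow> v \<in> hV S"
  using HsS by (auto simp: hV_def)

lemma C1: "c \<in> Hs \<Longrightarrow> c' \<in> Hs \<Longrightarrow> v \<in> hexV c \<Longrightarrow> v \<in> hexV c' \<Longrightarrow> c = c'"
proof -
  assume a: "c \<in> Hs" "c' \<in> Hs" "v \<in> hexV c" "v \<in> hexV c'"
  have "card {c\<in>Hs. v \<in> hexV c} \<le> Suc 0" using cnt[OF hexV_in[OF a(1,3)]] by simp
  moreover have "finite {c\<in>Hs. v \<in> hexV c}" using finHs by simp
  ultimately show ?thesis using card_le_Suc0_iff_eq a by blast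
qed

lemma C2: "c \<in> Hs \<Longrightarrow> v \<in> hexV c \<Longrightarrow> f \<in> Es \<Longrightarrow> v \<in> f \<Longrightarrow> False"
proof -
  assume a: "c \<in> Hs" "v \<in> hexV c" "f \<in> Es" "v \<in> f"
  have "{c\<in>Hs. v \<in> hexV c} \<noteq> {}" "{e\<in>Es. v \<in> e} \<noteq> {}" using a by blast+
  then have "card {c\<in>Hs. v \<in> hexV c} \<noteq> 0" "card {e\<in>Es. v \<in> e} \<noteq> 0"
    using finHs finEs by (simp_all add: card_eq_0_iff)
  then show False using cnt[OF hexV_in[OF a(1,2)]] by simp
qed

lemma C3: "f \<in> Es \<Longrightarrow> f' \<in> Es \<Longrightarrow> v \<in> f \<Longrightarrow> v \<in> f' \<Longrightarrow> f = f'"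
proof -
  assume a: "f \<in> Es" "f' \<in> Es" "v \<in> f" "v \<in> f'"
  have v: "v \<in> hV S" using edge_vert EsE a by blast
  have "card {e\<in>Es. v \<in> e} \<le> Suc 0" using cnt[OF v] by simp
  moreover have "finite {e\<in>Es. v \<in> e}" using finEs by simp
  ultimately show ?thesis using card_le_Suc0_iff_eq a by blast
qed

lemma C4: "v \<in> hV S \<Longrightarrow> (\<exists>c\<in>Hs. v \<in> hexV c) \<or> (\<exists>f\<in>Es. v \<in> f)"
proof (rule ccontr)
  assume v: "v \<in> hV S" and n: "\<not> ((\<exists>c\<in>Hs. v \<in> hexV c) \<or> (\<exists>f\<in>Es. v \<in> f))"
  then have A: "{c\<in>Hs. v \<in> hexV c} = {}" and B: "{e\<in>Es. v \<in> e} = {}" by auto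
  show False using cnt[OF v] unfolding A B by simp
qed

lemma PM: "perfect_matching (hV S) (hE S) M \<Longrightarrow> e \<in> M \<Longrightarrow> e' \<in> M \<Longrightarrow> v \<in> e \<Longrightarrow> v \<in> e' \<Longrightarrow> e = e'"
proof -
  assume a: "perfect_matching (hV S) (hE S) M" "e \<in> M" "e' \<in> M" "v \<in> e" "v \<in> e'"
  have "e \<in> hE S" using a(1,2) by (auto simp: perfect_matching_def)
  then have "v \<in> hV S" using edge_vert a(4) by blast
  then have "\<exists>!e. e \<in> M \<and> v \<in> e" using a(1) by (simp add: perfect_matching_def)
  then show ?thesis using a(2-5) by blast
qed

lemma alt: "alternating c M \<Longrightarrow> hex_edge c k \<in> M \<longleftrightarrow> (even k \<longleftrightarrow> hex_edge c 0 \<in> M)"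
proof (induction k)
  case (Suc k)
  have "hex_edge c k \<in> M \<longleftrightarrow> hex_edge c (Suc k) \<notin> M" using Suc.prems unfolding alternating_def by blast
  then show ?case using Suc.IH Suc.prems by auto
qed simp

lemma fC_iff: "M \<in> fC S Hs Es \<longleftrightarrow> perfect_matching (hV S) (hE S) M \<and>
                    (\<forall>c\<in>Hs. alternating c M) \<and> Es \<subseteq> M"
  by (simp add: fC_def)

lemma L2: "M \<in> fC S Hs Es \<Longrightarrow> c \<in> Hs \<Longrightarrow> e \<in> M \<Longrightarrow> v \<in> e \<Longrightarrow> v \<in> hexV c \<Longrightarrow> e \<in> hexE c"
proof -
  assume a: "M \<in> fC S Hs Es" "c \<in> Hs" "e \<in> M" "v \<in> e" "v \<in> hexV c"
  obtain k where k: "v \<in> hex_edge c k" "v \<in> hex_edge c (Suc k)" using hexV_edges[OF a(5)] by blast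
  have al: "alternating c M" using a fC_iff by blast
  have pm: "perfect_matching (hV S) (hE S) M" using a fC_iff by blast
  have "hex_edge c k \<in> M \<longleftrightarrow> hex_edge c (Suc k) \<notin> M" using al unfolding alternating_def by blast
  then have "hex_edge c k \<in> M \<or> hex_edge c (Suc k) \<in> M" by blast
  then obtain j where j: "hex_edge c j \<in> M" "v \<in> hex_edge c j" using k by blast
  have "e = hex_edge c j" using PM[OF pm a(3) j(1) a(4) j(2)] .
  then show ?thesis by (simp add: hexE_def)
qed

end

locale cc2 = cc + fixes g :: "nat \<Rightarrow> cell" and n :: nat
  assumes bij: "bij_betw g {..<n} Hs"
begin

definition phi :: "cell set set set \<Rightarrow> nat set" where
  "phi M = {i. i < n \<and> hex_edge (g i) 0 \<in> M}"

definition MX :: "nat set \<Rightarrow> cell set set set" where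
  "MX X = Es \<union> {hex_edge (g i) k | i k. i < n \<and> (even k \<longleftrightarrow> i \<in> X)}"

lemma gHs: "i < n \<Longrightarrow> g i \<in> Hs" using bij by (auto simp: bij_betw_def)

lemma hs_index: "c \<in> Hs \<Longrightarrow> \<exists>i<n. c = g i" using bij by (auto simp: bij_betw_def)

lemma g_inj: "i < n \<Longrightarrow> j < n \<Longrightarrow> g i = g j \<Longrightarrow> i = j"
  using bij by (auto simp: bij_betw_def inj_on_def)

lemma memphi: "i < n \<Longrightarrow> M \<in> fC S Hs Es \<Longrightarrow> hex_edge (g i) k \<in> M \<longleftrightarrow> (even k \<longleftrightarrow> i \<in> phi M)"
  using alt[of "g i" M k] gHs fC_iff by (auto simp: phi_def)



lemma inj_half: "M \<in> fC S Hs Es \<Longrightarrow> M' \<in> fC S Hs Es \<Longrightarrow> phi M = phi M' \<Longrightarrow> M \<subseteq> M'"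
proof
  fix e assume a: "M \<in> fC S Hs Es" "M' \<in> fC S Hs Es" "phi M = phi M'" and e: "e \<in> M"
  have pm: "perfect_matching (hV S) (hE S) M" using a fC_iff by blast
  then have eE: "e \<in> hE S" using e by (auto simp: perfect_matching_def)
  then obtain v where v: "v \<in> e" using edge_has_vert by blast
  have vV: "v \<in> hV S" using edge_vert eE v by blast
  show "e \<in> M'"
  proof (cases "\<exists>c\<in>Hs. v \<in> hexV c")
    case True
    then obtain c where c: "c \<in> Hs" "v \<in> hexV c" by blast
    then obtain i where i: "i < n" "c = g i" using hs_index by blast
    have "e \<in> hexE c" using L2[OF a(1) c(1) e v c(2)] .
    then obtain k where k: "e = hex_edge c k" by (auto simp: hexE_def)
    show ?thesis using memphi[OF i(1) a(1), of k] memphi[OF i(1) a(2), of k] a(3) e k i by simp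
  next
    case False
    then obtain f where f: "f \<in> Es" "v \<in> f" using C4[OF vV] by blast
    have "f \<in> M" "f \<in> M'" using f a fC_iff by auto
    then show ?thesis using PM[OF pm e \<open>f \<in> M\<close> v f(2)] by simp
  qed
qed

lemma phi_inj: "inj_on phi (fC S Hs Es)"
proof (rule inj_onI)
  fix x y assume "x \<in> fC S Hs Es" "y \<in> fC S Hs Es" "phi x = phi y"
  then show "x = y" using inj_half[of x y] inj_half[of y x] by auto
qed

lemma memMX: "i < n \<Longrightarrow> hex_edge (g i) k \<in> MX X \<longleftrightarrow> (even k \<longleftrightarrow> i \<in> X)"
proof
  assume i: "i < n" and m: "hex_edge (g i) k \<in> MX X"
  define v where "v = {g i, nb (g i) (k+5), nb (g i) k}"
  have v1: "v \<in> hex_edge (g i) k" unfolding v_def by (rule he_in)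
  have v2: "v \<in> hexV (g i)" using he_vert[OF v1] .
  show "even k \<longleftrightarrow> i \<in> X"
  proof (cases "hex_edge (g i) k \<in> Es")
    case True
    then show ?thesis using C2[OF gHs[OF i] v2 True v1] by blast
  next
    case False
    then obtain j k' where jk: "hex_edge (g i) k = hex_edge (g j) k'" "j < n" "even k' \<longleftrightarrow> j \<in> X"
      using m by (auto simp: MX_def)
    have "v \<in> hexV (g j)" using jk(1) v1 he_vert by metis
    then have "g i = g j" using C1 gHs i jk(2) v2 by blast
    then have "i = j" using g_inj i jk(2) by blast
    then show ?thesis using he_par jk by metis
  qed
qed (auto simp: MX_def)

lemma MX_fC: "MX X \<in> fC S Hs Es"
proof -
  have sub: "MX X \<subseteq> hE S"
    using EsE gHs HsS by (auto simp: MX_def hE_def hexE_def)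
  have uniq: "\<exists>!e. e \<in> MX X \<and> v \<in> e" if vV: "v \<in> hV S" for v
  proof (cases "\<exists>c\<in>Hs. v \<in> hexV c")
    case True
    then obtain c where c: "c \<in> Hs" "v \<in> hexV c" by blast
    then obtain i where i: "i < n" "c = g i" using hs_index by blast
    obtain k where k: "v \<in> hex_edge c k" "v \<in> hex_edge c (Suc k)" using hexV_edges[OF c(2)] by blast
    define k0 where "k0 = (if (even k \<longleftrightarrow> i \<in> X) then k else Suc k)"
    have k0: "v \<in> hex_edge c k0" "even k0 \<longleftrightarrow> i \<in> X" using k by (auto simp: k0_def)
    have in0: "hex_edge c k0 \<in> MX X" using memMX[OF i(1)] k0 i by simp
    show ?thesis
    proof (rule ex1I[of _ "hex_edge c k0"])
      show "hex_edge c k0 \<in> MX X \<and> v \<in> hex_edge c k0" using in0 k0 by simp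
    next
      fix e assume e: "e \<in> MX X \<and> v \<in> e"
      show "e = hex_edge c k0"
      proof (cases "e \<in> Es")
        case True then show ?thesis using C2 c e by blast
      next
        case False
        then obtain j k' where jk: "e = hex_edge (g j) k'" "j < n" "even k' \<longleftrightarrow> j \<in> X"
          using e by (auto simp: MX_def)
        have "v \<in> hexV (g j)" using jk(1) e he_vert by metis
        then have "g j = c" using C1 gHs jk(2) c by blast
        then have "j = i" using g_inj i jk(2) by blast
        then show ?thesis using he_unique[of v c k' k0] jk k0 e \<open>g j = c\<close> by auto
      qed
    qed
  next
    case False
    then obtain f where f: "f \<in> Es" "v \<in> f" using C4[OF vV] by blast
    show ?thesis
    proof (rule ex1I[of _ f])
      show "f \<in> MX X \<and> v \<in> f" using f by (simp add: MX_def)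
    next
      fix e assume e: "e \<in> MX X \<and> v \<in> e"
      show "e = f"
      proof (cases "e \<in> Es")
        case True then show ?thesis using C3 f e by blast
      next
        case False
        then obtain j k' where jk: "e = hex_edge (g j) k'" "j < n"
          using e by (auto simp: MX_def)
        have "v \<in> hexV (g j)" using jk(1) e he_vert by metis
        then show ?thesis using C2 gHs[OF jk(2)] f by blast
      qed
    qed
  qed
  have pm: "perfect_matching (hV S) (hE S) (MX X)"
    using sub uniq by (simp add: perfect_matching_def)
  have al: "alternating c (MX X)" if c: "c \<in> Hs" for c
  proof -
    obtain i where i: "i < n" "c = g i" using hs_index c by blast
    show ?thesis unfolding alternating_def using memMX[OF i(1)] i by simp
  qed
  show ?thesis using pm al by (auto simp: fC_iff MX_def)
qed

lemma phi_MX: "X \<subseteq> {..<n} \<Longrightarrow> phi (MX X) = X"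
  using memMX[of _ 0 X] by (auto simp: phi_def)

lemma phi_bij: "bij_betw phi (fC S Hs Es) (Pow {..<n})"
proof -
  have "phi ` fC S Hs Es = Pow {..<n}"
  proof
    show "phi ` fC S Hs Es \<subseteq> Pow {..<n}" by (auto simp: phi_def)
    show "Pow {..<n} \<subseteq> phi ` fC S Hs Es"
    proof
      fix X assume "X \<in> Pow {..<n}"
      then have "phi (MX X) = X" using phi_MX by simp
      then show "X \<in> phi ` fC S Hs Es" using MX_fC by (metis image_eqI)
    qed
  qed
  then show ?thesis using phi_inj by (simp add: bij_betw_def)
qed

lemma diff_half: "M \<in> fC S Hs Es \<Longrightarrow> M' \<in> fC S Hs Es \<Longrightarrow> e \<in> M \<Longrightarrow> e \<notin> M' \<Longrightarrow>
   \<exists>i<n. e \<in> hexE (g i) \<and> (i \<in> phi M \<longleftrightarrow> i \<notin> phi M')"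
proof -
  assume a: "M \<in> fC S Hs Es" "M' \<in> fC S Hs Es" and e: "e \<in> M" "e \<notin> M'"
  have pm: "perfect_matching (hV S) (hE S) M" using a fC_iff by blast
  then have eE: "e \<in> hE S" using e by (auto simp: perfect_matching_def)
  then obtain v where v: "v \<in> e" using edge_has_vert by blast
  have vV: "v \<in> hV S" using edge_vert eE v by blast
  show ?thesis
  proof (cases "\<exists>c\<in>Hs. v \<in> hexV c")
    case True
    then obtain c where c: "c \<in> Hs" "v \<in> hexV c" by blast
    then obtain i where i: "i < n" "c = g i" using hs_index by blast
    have ec: "e \<in> hexE c" using L2[OF a(1) c(1) e(1) v c(2)] .
    then obtain k where k: "e = hex_edge c k" by (auto simp: hexE_def)
    have "i \<in> phi M \<longleftrightarrow> i \<notin> phi M'"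
      using memphi[OF i(1) a(1), of k] memphi[OF i(1) a(2), of k] e k i by auto
    then show ?thesis using i ec by blast
  next
    case False
    then obtain f where f: "f \<in> Es" "v \<in> f" using C4[OF vV] by blast
    have "f \<in> M" "f \<in> M'" using f a fC_iff by auto
    then show ?thesis using PM[OF pm e(1) \<open>f \<in> M\<close> v f(2)] e by simp
  qed
qed

lemma symdiff: "M \<in> fC S Hs Es \<Longrightarrow> M' \<in> fC S Hs Es \<Longrightarrow>
  (M - M') \<union> (M' - M) = (\<Union>i\<in>(phi M - phi M') \<union> (phi M' - phi M). hexE (g i))"
proof -
  assume a: "M \<in> fC S Hs Es" "M' \<in> fC S Hs Es"
  show ?thesis
  proof
    show "(M - M') \<union> (M' - M) \<subseteq> (\<Union>i\<in>(phi M - phi M') \<union> (phi M' - phi M). hexE (g i))"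
      using diff_half[OF a] diff_half[OF a(2,1)] by blast
    show "(\<Union>i\<in>(phi M - phi M') \<union> (phi M' - phi M). hexE (g i)) \<subseteq> (M - M') \<union> (M' - M)"
    proof
      fix e assume "e \<in> (\<Union>i\<in>(phi M - phi M') \<union> (phi M' - phi M). hexE (g i))"
      then obtain i where i: "i \<in> (phi M - phi M') \<union> (phi M' - phi M)" "e \<in> hexE (g i)" by blast
      then have "i < n" by (auto simp: phi_def)
      obtain k where k: "e = hex_edge (g i) k" using i(2) by (auto simp: hexE_def)
      show "e \<in> (M - M') \<union> (M' - M)"
        using memphi[OF \<open>i<n\<close> a(1), of k] memphi[OF \<open>i<n\<close> a(2), of k] i(1) k by auto
    qed
  qed
qed

lemma adj: "M \<in> fC S Hs Es \<Longrightarrow> M' \<in> fC S Hs Es \<Longrightarrow>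
  res_adj S M M' \<longleftrightarrow> card ((phi M - phi M') \<union> (phi M' - phi M)) = 1"
proof -
  assume a: "M \<in> fC S Hs Es" "M' \<in> fC S Hs Es"
  define D where "D = (phi M - phi M') \<union> (phi M' - phi M)"
  have sd: "(M - M') \<union> (M' - M) = (\<Union>i\<in>D. hexE (g i))" using symdiff[OF a] by (simp add: D_def)
  have Dn: "D \<subseteq> {..<n}" by (auto simp: D_def phi_def)
  show ?thesis unfolding D_def[symmetric]
  proof
    assume "res_adj S M M'"
    then obtain c where c: "c \<in> S" "hexE c = (\<Union>i\<in>D. hexE (g i))" using sd by (auto simp: res_adj_def)
    have "hexE c \<noteq> {}" using card_hexE[of c] by auto
    then obtain i where i: "i \<in> D" using c by auto
    have eq: "hexE (g j) = hexE c" if j: "j \<in> D" for j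
    proof -
      have "hexE (g j) \<subseteq> hexE c" using c(2) j by blast
      then show ?thesis using card_subset_eq[OF finite_hexE] card_hexE by metis
    qed
    have "D = {i}"
    proof (rule ccontr)
      assume "D \<noteq> {i}"
      then obtain j where j: "j \<in> D" "j \<noteq> i" using i by blast
      have ij: "i < n" "j < n" using i j Dn by auto
      define v where "v = {g i, nb (g i) (0+5), nb (g i) 0}"
      have v1: "v \<in> hex_edge (g i) 0" unfolding v_def by (rule he_in)
      have "hex_edge (g i) 0 \<in> hexE (g i)" by (simp add: hexE_def)
      then have "hex_edge (g i) 0 \<in> hexE (g j)" using eq[OF i] eq[OF j(1)] by simp
      then obtain k where "hex_edge (g i) 0 = hex_edge (g j) k" by (auto simp: hexE_def)
      then have "v \<in> hexV (g j)" using v1 he_vert by metis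
      moreover have "v \<in> hexV (g i)" using v1 he_vert by metis
      ultimately have "g i = g j" using C1 gHs ij by blast
      then show False using g_inj ij j by blast
    qed
    then show "card D = 1" by simp
  next
    assume "card D = 1"
    then obtain i where "D = {i}" by (rule card_1_singletonE)
    moreover have "g i \<in> S" using gHs HsS Dn \<open>D = {i}\<close> by auto
    ultimately show "res_adj S M M'" using sd by (auto simp: res_adj_def)
  qed
qed

end

theorem lemma1:
  fixes S Hs :: "cell set" and Es :: "cell set set set" and n :: nat
  assumes "hexagonal_system S" and "kekulean S"
    and "clar_cover S Hs Es" and "card Hs = n"
  shows "\<exists>\<phi>. bij_betw \<phi> (fC S Hs Es) (Pow {..<n}) \<and>
           (\<forall>M\<in>fC S Hs Es. \<forall>M'\<in>fC S Hs Es.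
              res_adj S M M' \<longleftrightarrow> card ((\<phi> M - \<phi> M') \<union> (\<phi> M' - \<phi> M)) = 1)"
proof -
  interpret cc S Hs Es using assms by (unfold_locales) (auto simp: hexagonal_system_def)
  obtain g where g: "bij_betw g {0..<card Hs} Hs" using ex_bij_betw_nat_finite finHs by blast
  then have "bij_betw g {..<n} Hs" using assms(4) by (simp add: atLeast0LessThan)
  then interpret cc2 S Hs Es g n by unfold_locales
  show ?thesis using phi_bij adj by blast
qed

end
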